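(* Let $A\in\mathbb{R}^{n\times n}$, let $\lambda\in\mathbb{R}$, and let $v\in\mathbb{R}^{n\times1}$ and $u\in\mathbb{R}^{1\times n}$ satisfy $Av=\lambda v$, $uA=\lambda u$ and $uv=1$. Then for every row vector $u'\in\mathbb{R}^{1\times n}$ with $u'v=1$ there exists a matrix $Z$ conjugate (similar) to $A$ such that (i) $u'Z=\lambda u'$; (ii) $Zv=\lambda v$; and (iii) for every row vector $w$ and every scalar $\mu\neq\lambda$ with $wA=\mu w$, one has $wZ=\mu w$. *)

theory Defs
  imports "HOL-Analysis.Analysis"
begin

definition similar_matrix :: "real^'n^'n \<Rightarrow> real^'n^'n \<Rightarrow> bool" where
  "similar_matrix Z A \<longleftrightarrow> (\<exists>P. invertible P \<and> Z = P ** A ** matrix_inv P)"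

end

theory Submission
  imports Defs
begin

definition outer :: "real^'n \<Rightarrow> real^'n \<Rightarrow> real^'n^'n" where
  "outer v d = (\<chi> i j. v$i * d$j)"

lemma vm_outer: "y v* (mat 1 + c *\<^sub>R outer v d) = y + (c * (y \<bullet> v)) *\<^sub>R d"
  by (simp add: vec_eq_iff vector_matrix_mult_def outer_def mat_def inner_vec_def
      distrib_left sum.distrib sum_distrib_right sum_distrib_left algebra_simps
      if_distrib[of "\<lambda>x. _ * x"] cong: if_cong)

lemma mv_outer: "(mat 1 + c *\<^sub>R outer v d) *v x = x + (c * (d \<bullet> x)) *\<^sub>R v"
  by (simp add: vec_eq_iff matrix_vector_mult_def outer_def mat_def inner_vec_def
      distrib_right sum.distrib sum_distrib_right sum_distrib_left algebra_simps
      if_distrib[of "\<lambda>x. x * _"] if_distrib[of "\<lambda>x. _ * x"] cong: if_cong)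

lemma outer_sq: assumes "d \<bullet> v = 0"
  shows "(mat 1 + outer v d) ** (mat 1 + (-1) *\<^sub>R outer v d) = mat 1"
    and "(mat 1 + (-1) *\<^sub>R outer v d) ** (mat 1 + outer v d) = mat 1"
proof -
  have e: "\<And>M N :: real^'n^'n. (\<And>x. M *v x = N *v x) \<Longrightarrow> M = N"
    by (metis matrix_eq)
  show "(mat 1 + outer v d) ** (mat 1 + (-1) *\<^sub>R outer v d) = mat 1"
  proof (rule e)
    fix x
    have "(mat 1 + 1 *\<^sub>R outer v d) *v ((mat 1 + (-1) *\<^sub>R outer v d) *v x) = x"
      unfolding mv_outer using assms
      by (simp add: inner_add_right inner_commute algebra_simps)
    then show "(mat 1 + outer v d) ** (mat 1 + (-1) *\<^sub>R outer v d) *v x = mat 1 *v x"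
      by (simp add: matrix_vector_mul_assoc)
  qed
  show "(mat 1 + (-1) *\<^sub>R outer v d) ** (mat 1 + outer v d) = mat 1"
  proof (rule e)
    fix x
    have "(mat 1 + (-1) *\<^sub>R outer v d) *v ((mat 1 + 1 *\<^sub>R outer v d) *v x) = x"
      unfolding mv_outer using assms
      by (simp add: inner_add_right inner_commute algebra_simps)
    then show "(mat 1 + (-1) *\<^sub>R outer v d) ** (mat 1 + outer v d) *v x = mat 1 *v x"
      by (simp add: matrix_vector_mul_assoc)
  qed
qed

lemma inv_unique: assumes "P ** Q = mat 1" "Q ** P = mat 1"
  shows "matrix_inv (P :: real^'n^'n) = Q"
  unfolding matrix_inv_def
proof (rule some_equality)
  show "P ** Q = mat 1 \<and> Q ** P = mat 1" using assms by simp
  fix Q' assume "P ** Q' = mat 1 \<and> Q' ** P = mat 1"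
  then have "Q' = Q' ** (P ** Q)" using assms by simp
  also have "\<dots> = (Q' ** P) ** Q" by (simp add: matrix_mul_assoc)
  finally show "Q' = Q" using \<open>P ** Q' = mat 1 \<and> Q' ** P = mat 1\<close> by simp
qed

theorem lemma4p2:
  fixes A :: "real^'n^'n" and l :: real and v u :: "real^'n"
  assumes "A *v v = l *\<^sub>R v"
    and "u v* A = l *\<^sub>R u"
    and "u \<bullet> v = 1"
  shows "\<forall>u' :: real^'n. u' \<bullet> v = 1 \<longrightarrow>
           (\<exists>Z :: real^'n^'n. similar_matrix Z A
              \<and> u' v* Z = l *\<^sub>R u'
              \<and> Z *v v = l *\<^sub>R v
              \<and> (\<forall>(w :: real^'n) (m :: real). m \<noteq> l \<and> w v* A = m *\<^sub>R w \<longrightarrow> w v* Z = m *\<^sub>R w))"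
proof (intro allI impI)
  fix u' :: "real^'n" assume u': "u' \<bullet> v = 1"
  define d where "d = u - u'"
  have dv: "d \<bullet> v = 0" using u' assms(3) by (simp add: d_def inner_diff_left)
  define P where "P = mat 1 + 1 *\<^sub>R outer v d"
  define Q where "Q = mat 1 + (-1) *\<^sub>R outer v d"
  have PQ: "P ** Q = mat 1" "Q ** P = mat 1" using outer_sq[OF dv] by (simp_all add: P_def Q_def)
  have iP: "matrix_inv P = Q" using inv_unique[OF PQ] .
  have inv: "invertible P" unfolding invertible_def using PQ by blast
  define Z where "Z = P ** A ** Q"
  have sim: "similar_matrix Z A" unfolding similar_matrix_def Z_def using inv iP by blast
  have r1: "u' v* Z = l *\<^sub>R u'"
  proof -
    have "u' v* P = u" unfolding P_def vm_outer using u' by (simp add: d_def)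
    moreover have "u v* Q = u'" unfolding Q_def vm_outer using assms(3) by (simp add: d_def)
    ultimately have "u' v* Z = (l *\<^sub>R u) v* Q"
      using assms(2) by (simp add: Z_def vector_matrix_mul_assoc[symmetric])
    also have "\<dots> = l *\<^sub>R (u v* Q)" unfolding Q_def vm_outer
      by (simp add: algebra_simps inner_scaleR_left)
    finally show ?thesis using \<open>u v* Q = u'\<close> by simp
  qed
  have r2: "Z *v v = l *\<^sub>R v"
  proof -
    have "Q *v v = v" unfolding Q_def mv_outer using dv by simp
    have "P *v (l *\<^sub>R v) = l *\<^sub>R v" unfolding P_def mv_outer using dv
      by (simp add: inner_scaleR_right)
    then show ?thesis using \<open>Q *v v = v\<close> assms(1)
      by (simp add: Z_def matrix_vector_mul_assoc[symmetric])
  qed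
  have r3: "w v* Z = m *\<^sub>R w" if "m \<noteq> l" "w v* A = m *\<^sub>R w" for w m
  proof -
    have "(w v* A) \<bullet> v = w \<bullet> (A *v v)"
      by (simp add: inner_vec_def vector_matrix_mult_def matrix_vector_mult_def
          sum_distrib_left sum_distrib_right algebra_simps) (rule sum.swap)
    then have "m * (w \<bullet> v) = l * (w \<bullet> v)" using that assms(1)
      by (simp add: inner_scaleR_left inner_scaleR_right)
    then have wv: "w \<bullet> v = 0" using that(1) by simp
    have "w v* P = w" unfolding P_def vm_outer using wv by simp
    then have "w v* Z = (m *\<^sub>R w) v* Q" using that(2)
      by (simp add: Z_def vector_matrix_mul_assoc[symmetric])
    also have "\<dots> = m *\<^sub>R w" unfolding Q_def vm_outer using wv
      by (simp add: inner_scaleR_left)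
    finally show ?thesis .
  qed
  show "\<exists>Z. similar_matrix Z A \<and> u' v* Z = l *\<^sub>R u' \<and> Z *v v = l *\<^sub>R v
      \<and> (\<forall>w m. m \<noteq> l \<and> w v* A = m *\<^sub>R w \<longrightarrow> w v* Z = m *\<^sub>R w)"
    using sim r1 r2 r3 by blast
qed

end
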